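(* Work on the jet space with coordinates $t\in\mathbb R$, $\mathbf x,\mathbf v,\mathbf v',\mathbf v''\in\mathbb R^3$, together with parameters $s_0\in\mathbb R$, $\mathbf s\in\mathbb R^3$, and a constant $m$. Let $\cdot$ and $\times$ be the Euclidean dot and cross products on $\mathbb R^3$. Put $$D=(1+\mathbf v\cdot\mathbf v)(s_0^2+\mathbf s\cdot\mathbf s)-(s_0+\mathbf s\cdot\mathbf v)^2 ,$$ and define $$\mathbf E=\frac{\mathbf v''\times(\mathbf s-s_0\mathbf v)}{D^{3/2}}-3\,\frac{(s_0^2+\mathbf s\cdot\mathbf s)\,\mathbf v'\cdot\mathbf v-(s_0+\mathbf s\cdot\mathbf v)\,\mathbf s\cdot\mathbf v'}{D^{5/2}}\,\mathbf v'\times(\mathbf s-s_0\mathbf v)+m\,\frac{(1+\mathbf v\cdot\mathbf v)\mathbf v'-(\mathbf v'\cdot\mathbf v)\mathbf v}{(1+\mathbf v\cdot\mathbf v)^{3/2}(s_0^2+\mathbf s\cdot\mathbf s)^{3/2}}.$$ For arbitrary $\mathbf n,\mathbf q\in\mathbb R^3$, let $\xi_3$ be the vector field $$\begin{aligned}\xi_3={}&-(\mathbf q\cdot\mathbf s)\partial_{s_0}+\big(s_0\mathbf q+\mathbf n\times\mathbf s\big)\cdot\partial_{\mathbf s}-(\mathbf q\cdot\mathbf x)\partial_t+\big(t\mathbf q+\mathbf n\times\mathbf x\big)\cdot\partial_{\mathbf x}\\&+\big(\mathbf q+(\mathbf q\cdot\mathbf v)\mathbf v+\mathbf n\times\mathbf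 v\big)\cdot\partial_{\mathbf v}+\big(2(\mathbf q\cdot\mathbf v)\mathbf v'+(\mathbf q\cdot\mathbf v')\mathbf v+\mathbf n\times\mathbf v'\big)\cdot\partial_{\mathbf v'}\\&+\big(3(\mathbf q\cdot\mathbf v)\mathbf v''+3(\mathbf q\cdot\mathbf v')\mathbf v'+(\mathbf q\cdot\mathbf v'')\mathbf v+\mathbf n\times\mathbf v''\big)\cdot\partial_{\mathbf v''}.\end{aligned}$$ This is the prolongation to $J_3(\mathbb R;\mathbb R^3)$ of the infinitesimal rotation of $\mathbb R^4=\{(t,\mathbf x)\}$ with parameters $\mathbf n,\mathbf q$, extended to act on $(s_0,\mathbf s)$ as a four-vector. Here $\mathbf a\cdot\partial_{\mathbf x}=\sum_a a^a\partial_{x^a}$. Then, applying $\xi_3$ componentwise to $\mathbf E$, $$\xi_3(\mathbf E)=\mathbf n\times\mathbf E+(\mathbf q\cdot\mathbf v)\,\mathbf E-(\mathbf v\cdot\mathbf E)\,\mathbf q .$$ In particular, the third-order system $\mathbf E=0$ is invariant under these (orthogonal) transformations.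
   Context: $\mathbf E$ is the parametrization, with respect to $t=x^0$, of the four-dimensional Euler–Poisson expression $\boldsymbol{\mathcal E}$ of the companion Assertion 1. It is defined on the open set where $D>0$ and $s_0^2+\mathbf s\cdot\mathbf s>0$. *)

theory Defs
  imports "HOL-Analysis.Analysis"
begin

text \<open>A point of the extended jet space: (t, x, v, v', v'', s0, s),
  with t, s0 real and x, v, v', v'', s in R^3.\<close>
type_synonym jpt = "real \<times> (real^3) \<times> (real^3) \<times> (real^3) \<times> (real^3) \<times> real \<times> (real^3)"

definition Dfun :: "real^3 \<Rightarrow> real \<Rightarrow> real^3 \<Rightarrow> real" where
  "Dfun v s0 s = (1 + v \<bullet> v) * (s0^2 + s \<bullet> s) - (s0 + s \<bullet> v)^2"

definition Efun :: "real \<Rightarrow> jpt \<Rightarrow> real^3" where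
  "Efun m p = (case p of (t, x, v, v1, v2, s0, s) \<Rightarrow>
     (1 / (Dfun v s0 s) powr (3/2)) *\<^sub>R cross3 v2 (s - s0 *\<^sub>R v)
     - (3 * ((s0^2 + s \<bullet> s) * (v1 \<bullet> v) - (s0 + s \<bullet> v) * (s \<bullet> v1))
          / (Dfun v s0 s) powr (5/2)) *\<^sub>R cross3 v1 (s - s0 *\<^sub>R v)
     + (m / ((1 + v \<bullet> v) powr (3/2) * (s0^2 + s \<bullet> s) powr (3/2)))
          *\<^sub>R ((1 + v \<bullet> v) *\<^sub>R v1 - (v1 \<bullet> v) *\<^sub>R v))"

definition xi3 :: "real^3 \<Rightarrow> real^3 \<Rightarrow> jpt \<Rightarrow> jpt" where
  "xi3 n q p = (case p of (t, x, v, v1, v2, s0, s) \<Rightarrow>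
     ( - (q \<bullet> x),
       t *\<^sub>R q + cross3 n x,
       q + (q \<bullet> v) *\<^sub>R v + cross3 n v,
       2 * (q \<bullet> v) *\<^sub>R v1 + (q \<bullet> v1) *\<^sub>R v + cross3 n v1,
       3 * (q \<bullet> v) *\<^sub>R v2 + 3 * (q \<bullet> v1) *\<^sub>R v1 + (q \<bullet> v2) *\<^sub>R v + cross3 n v2,
       - (q \<bullet> s),
       s0 *\<^sub>R q + cross3 n s))"

end

theory Submission imports Defs begin

lemma bb_cross: "bounded_bilinear (cross3 :: real^3 \<Rightarrow> real^3 \<Rightarrow> real^3)"
  using bilinear_cross bilinear_conv_bounded_bilinear by blast

lemma cross_vd:
  fixes f g :: "real \<Rightarrow> real^3"
  assumes "(f has_vector_derivative f') (at x)" "(g has_vector_derivative g') (at x)"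
    "D = cross3 (f x) g' + cross3 f' (g x)"
  shows "((\<lambda>h. cross3 (f h) (g h)) has_vector_derivative D) (at x)"
  using bounded_bilinear.has_vector_derivative[OF bb_cross assms(1,2)] assms(3) by simp

lemma inner_vd:
  fixes f g :: "real \<Rightarrow> real^3"
  assumes "(f has_vector_derivative f') (at x)" "(g has_vector_derivative g') (at x)"
   "D = f x \<bullet> g' + f' \<bullet> g x"
  shows "((\<lambda>h. f h \<bullet> g h) has_real_derivative D) (at x)"
  using bounded_bilinear.has_vector_derivative[OF bounded_bilinear_inner assms(1,2)] assms(3)
  by (simp add: has_real_derivative_iff_has_vector_derivative)

lemma lin_vd: "D = a \<Longrightarrow> ((\<lambda>h. c + h *\<^sub>R (a::real^3)) has_vector_derivative D) (at x)"
  by (auto intro!: derivative_eq_intros)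

lemma lin_rd: "D = a \<Longrightarrow> ((\<lambda>h. c + h * (a::real)) has_real_derivative D) (at x)"
  by (auto intro!: derivative_eq_intros)


lemma decl:
  fixes m :: real
  shows "Efun m (t, x, V, V1, V2, S0, Sv) =
     Dfun V S0 Sv powr (-3/2) *\<^sub>R cross3 V2 (Sv - S0 *\<^sub>R V)
     - (3 * ((S0^2 + Sv \<bullet> Sv) * (V1 \<bullet> V) - (S0 + Sv \<bullet> V) * (Sv \<bullet> V1))
       * Dfun V S0 Sv powr (-5/2)) *\<^sub>R cross3 V1 (Sv - S0 *\<^sub>R V)
     + (m * (1 + V \<bullet> V) powr (-3/2) * (S0^2 + Sv \<bullet> Sv) powr (-3/2)) *\<^sub>R
       ((1 + V \<bullet> V) *\<^sub>R V1 - (V1 \<bullet> V) *\<^sub>R V)"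
proof -
  have e: "\<And>x::real. x powr (-3/2) = 1 / x powr (3/2)" "\<And>x::real. x powr (-5/2) = 1 / x powr (5/2)"
    using powr_minus_divide[of _ "3/2"] powr_minus_divide[of _ "5/2"] by auto
  show ?thesis unfolding Efun_def e by (simp add: field_simps)
qed

lemma lincomb: "(b*k) *\<^sub>R Y + ((b*(k*2)) *\<^sub>R Y + ((a*(k*4)) *\<^sub>R X + (c*(k*4)) *\<^sub>R w))
  = (a*k) *\<^sub>R X + ((c*k) *\<^sub>R w + ((a*(k*3)) *\<^sub>R X + ((b*(k*3)) *\<^sub>R Y + (c*(k*3)) *\<^sub>R (w::real^3))))"
  by (simp add: vec_eq_iff algebra_simps)

lemma pt: "(t, x, v, v1, v2, s0, s) + h *\<^sub>R xi3 n q (t, x, v, v1, v2, s0, s) =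
  (t + h * (- (q \<bullet> x)), x + h *\<^sub>R (t *\<^sub>R q + cross3 n x),
   v + h *\<^sub>R (q + (q \<bullet> v) *\<^sub>R v + cross3 n v),
   v1 + h *\<^sub>R (2 * (q \<bullet> v) *\<^sub>R v1 + (q \<bullet> v1) *\<^sub>R v + cross3 n v1),
   v2 + h *\<^sub>R (3 * (q \<bullet> v) *\<^sub>R v2 + 3 * (q \<bullet> v1) *\<^sub>R v1 + (q \<bullet> v2) *\<^sub>R v + cross3 n v2),
   s0 + h * (- (q \<bullet> s)), s + h *\<^sub>R (s0 *\<^sub>R q + cross3 n s))"
  by (simp add: xi3_def)

theorem mainTheorem3:
  fixes m t s0 :: real and x v v1 v2 s n q :: "real^3"
  assumes "Dfun v s0 s > 0" and "s0^2 + s \<bullet> s > 0"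
  defines "p \<equiv> (t, x, v, v1, v2, s0, s)"
  shows "((\<lambda>h::real. Efun m (p + h *\<^sub>R xi3 n q p)) has_vector_derivative
           (cross3 n (Efun m p) + (q \<bullet> v) *\<^sub>R Efun m p - (v \<bullet> Efun m p) *\<^sub>R q)) (at 0)"
proof -
  define a where "a = q + (q \<bullet> v) *\<^sub>R v + cross3 n v"
  define b1 where "b1 = 2 * (q \<bullet> v) *\<^sub>R v1 + (q \<bullet> v1) *\<^sub>R v + cross3 n v1"
  define b2 where "b2 = 3 * (q \<bullet> v) *\<^sub>R v2 + 3 * (q \<bullet> v1) *\<^sub>R v1 + (q \<bullet> v2) *\<^sub>R v + cross3 n v2"
  define c0 where "c0 = - (q \<bullet> s)"
  define cs where "cs = s0 *\<^sub>R q + cross3 n s"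
  define V where "V = (\<lambda>h::real. v + h *\<^sub>R a)"
  define V1 where "V1 = (\<lambda>h::real. v1 + h *\<^sub>R b1)"
  define V2 where "V2 = (\<lambda>h::real. v2 + h *\<^sub>R b2)"
  define S0 where "S0 = (\<lambda>h::real. s0 + h * c0)"
  define Sv where "Sv = (\<lambda>h::real. s + h *\<^sub>R cs)"
  have V: "(V has_vector_derivative a) (at 0)" "V 0 = v" unfolding V_def by (auto intro: lin_vd)
  have V1: "(V1 has_vector_derivative b1) (at 0)" "V1 0 = v1" unfolding V1_def by (auto intro: lin_vd)
  have V2: "(V2 has_vector_derivative b2) (at 0)" "V2 0 = v2" unfolding V2_def by (auto intro: lin_vd)
  have Sv: "(Sv has_vector_derivative cs) (at 0)" "Sv 0 = s" unfolding Sv_def by (auto intro: lin_vd)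
  have S0: "(S0 has_real_derivative c0) (at 0)" "S0 0 = s0" unfolding S0_def by (auto intro: lin_rd)
  define D0 where "D0 = Dfun v s0 s"
  define S where "S = s0^2 + s \<bullet> s"
  define W where "W = 1 + v \<bullet> v"
  define N where "N = S * (v1 \<bullet> v) - (s0 + s \<bullet> v) * (s \<bullet> v1)"
  define U where "U = (\<lambda>h. Sv h - S0 h *\<^sub>R V h)"
  define u where "u = s - s0 *\<^sub>R v"
  have dW: "((\<lambda>h. 1 + V h \<bullet> V h) has_real_derivative 2 * (q \<bullet> v) * W) (at 0)"
    apply (rule derivative_eq_intros inner_vd V S0 Sv | simp add: V S0 Sv)+
    by (simp add: a_def W_def cross3_simps forall_3)
  have dS: "((\<lambda>h. (S0 h)^2 + Sv h \<bullet> Sv h) has_real_derivative 0) (at 0)"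
    apply (rule derivative_eq_intros inner_vd V S0 Sv | simp add: V S0 Sv)+
    by (simp add: c0_def cs_def cross3_simps forall_3)
  have dD: "((\<lambda>h. Dfun (V h) (S0 h) (Sv h)) has_real_derivative 2 * (q \<bullet> v) * D0) (at 0)"
    unfolding Dfun_def
    apply (rule derivative_eq_intros inner_vd V S0 Sv | simp add: V S0 Sv)+
    by (simp add: a_def c0_def cs_def D0_def Dfun_def cross3_simps power2_eq_square)
  have dN: "((\<lambda>h. ((S0 h)^2 + Sv h \<bullet> Sv h) * (V1 h \<bullet> V h) - (S0 h + Sv h \<bullet> V h) * (Sv h \<bullet> V1 h))
     has_real_derivative 3 * (q \<bullet> v) * N + (q \<bullet> v1) * D0) (at 0)"
    apply (rule derivative_eq_intros inner_vd V V1 S0 Sv | simp add: V V1 S0 Sv)+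
    by (simp add: a_def b1_def c0_def cs_def D0_def N_def S_def Dfun_def cross3_simps power2_eq_square)
  have D0pos: "D0 > 0" using assms(1) D0_def by simp
  have Spos: "S > 0" using assms(2) S_def by simp
  have Wpos: "W > 0" unfolding W_def by (simp add: add_pos_nonneg)
  define u1 where "u1 = cs - (s0 *\<^sub>R a + c0 *\<^sub>R v)"
  have dU: "(U has_vector_derivative u1) (at 0)" "U 0 = u"
    unfolding U_def
    by (rule derivative_eq_intros V S0 Sv | simp add: V S0 Sv u1_def u_def)+
  define X0 where "X0 = cross3 v2 u"
  define Y0 where "Y0 = cross3 v1 u"
  define w0 where "w0 = W *\<^sub>R v1 - (v1 \<bullet> v) *\<^sub>R v"
  have dX: "((\<lambda>h. cross3 (V2 h) (U h)) has_vector_derivative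
     cross3 n X0 + (4 * (q \<bullet> v)) *\<^sub>R X0 - (v \<bullet> X0) *\<^sub>R q + (3 * (q \<bullet> v1)) *\<^sub>R Y0) (at 0)"
    apply (rule cross_vd[OF V2(1) dU(1)])
    by (simp add: V2 dU X0_def Y0_def u1_def u_def a_def b2_def c0_def cs_def cross3_simps forall_3)
  have dY: "((\<lambda>h. cross3 (V1 h) (U h)) has_vector_derivative
     cross3 n Y0 + (3 * (q \<bullet> v)) *\<^sub>R Y0 - (v \<bullet> Y0) *\<^sub>R q) (at 0)"
    apply (rule cross_vd[OF V1(1) dU(1)])
    by (simp add: V1 dU Y0_def u1_def u_def a_def b1_def c0_def cs_def cross3_simps forall_3)
  have dw: "((\<lambda>h. (1 + V h \<bullet> V h) *\<^sub>R V1 h - (V1 h \<bullet> V h) *\<^sub>R V h) has_vector_derivative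
     cross3 n w0 + (4 * (q \<bullet> v)) *\<^sub>R w0 - (v1 \<bullet> v) *\<^sub>R q) (at 0)"
    apply (rule derivative_eq_intros inner_vd V V1 | simp add: V V1)+
    by (simp add: w0_def W_def a_def b1_def cross3_simps forall_3)
  define A0 where "A0 = D0 powr (-3/2)"
  define B0 where "B0 = 3 * N * D0 powr (-5/2)"
  define C0 where "C0 = m * W powr (-3/2) * S powr (-3/2)"
  have p52: "D0 powr (-5/2) * D0 = D0 powr (-3/2)"
    using powr_add[of D0 "-5/2" 1] D0pos by simp
  have p72: "D0 powr (-7/2) * D0 = D0 powr (-5/2)"
    using powr_add[of D0 "-7/2" 1] D0pos by simp
  have pW: "W powr (-5/2) * W = W powr (-3/2)"
    using powr_add[of W "-5/2" 1] Wpos by simp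
  have dA: "((\<lambda>h. Dfun (V h) (S0 h) (Sv h) powr (-3/2)) has_real_derivative -3 * (q \<bullet> v) * A0) (at 0)"
    apply (rule derivative_eq_intros dD | simp add: V S0 Sv D0pos flip: D0_def)+
    using p52 by (simp add: A0_def algebra_simps)
  have e1: "D0 powr (- (7/2)) = D0 powr (- (5/2)) / D0" "D0 powr (- (5/2)) = D0 powr (- (3/2)) / D0"
      using p52 p72 D0pos by (auto simp: field_simps)
  have dB: "((\<lambda>h. 3 * (((S0 h)^2 + Sv h \<bullet> Sv h) * (V1 h \<bullet> V h) - (S0 h + Sv h \<bullet> V h) * (Sv h \<bullet> V1 h))
       * Dfun (V h) (S0 h) (Sv h) powr (-5/2)) has_real_derivative
       -2 * (q \<bullet> v) * B0 + 3 * (q \<bullet> v1) * A0) (at 0)"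
    apply (rule dN dD derivative_eq_intros | simp add: V V1 S0 Sv D0pos flip: D0_def)+
    apply (simp add: S_def[symmetric])
    using D0pos by (simp add: e1 A0_def B0_def N_def field_simps)
  have dC: "((\<lambda>h. m * (1 + V h \<bullet> V h) powr (-3/2) * ((S0 h)^2 + Sv h \<bullet> Sv h) powr (-3/2))
       has_real_derivative -3 * (q \<bullet> v) * C0) (at 0)"
    apply (rule dW dS derivative_eq_intros | simp add: V V1 S0 Sv Wpos Spos flip: W_def S_def)+
    using pW by (simp add: C0_def algebra_simps)
  have dec: "\<And>h. Efun m (p + h *\<^sub>R xi3 n q p) =
     Dfun (V h) (S0 h) (Sv h) powr (-3/2) *\<^sub>R cross3 (V2 h) (U h)
     - (3 * (((S0 h)^2 + Sv h \<bullet> Sv h) * (V1 h \<bullet> V h) - (S0 h + Sv h \<bullet> V h) * (Sv h \<bullet> V1 h))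
       * Dfun (V h) (S0 h) (Sv h) powr (-5/2)) *\<^sub>R cross3 (V1 h) (U h)
     + (m * (1 + V h \<bullet> V h) powr (-3/2) * ((S0 h)^2 + Sv h \<bullet> Sv h) powr (-3/2)) *\<^sub>R
       ((1 + V h \<bullet> V h) *\<^sub>R V1 h - (V1 h \<bullet> V h) *\<^sub>R V h)"
  proof -
    fix h
    have "p + h *\<^sub>R xi3 n q p = (t + h * (- (q \<bullet> x)), x + h *\<^sub>R (t *\<^sub>R q + cross3 n x), V h, V1 h, V2 h, S0 h, Sv h)"
      unfolding p_def pt V_def V1_def V2_def S0_def Sv_def a_def b1_def b2_def c0_def cs_def by (rule refl)
    then show "?thesis h" unfolding U_def by (simp add: decl)
  qed
  have vw0: "v \<bullet> w0 = v1 \<bullet> v"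
    unfolding w0_def W_def by (simp add: algebra_simps inner_commute)
  have Av: "Dfun (V 0) (S0 0) (Sv 0) powr (-3/2) = A0"
    by (simp add: V S0 Sv A0_def D0_def)
  have Bv: "3 * (((S0 0)^2 + Sv 0 \<bullet> Sv 0) * (V1 0 \<bullet> V 0) - (S0 0 + Sv 0 \<bullet> V 0) * (Sv 0 \<bullet> V1 0))
       * Dfun (V 0) (S0 0) (Sv 0) powr (-5/2) = B0"
    by (simp add: V V1 S0 Sv B0_def D0_def N_def S_def)
  have Cv: "m * (1 + V 0 \<bullet> V 0) powr (-3/2) * ((S0 0)^2 + Sv 0 \<bullet> Sv 0) powr (-3/2) = C0"
    by (simp add: V S0 Sv C0_def W_def S_def)
  have Xv: "cross3 (V2 0) (U 0) = X0" by (simp add: V2 dU X0_def)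
  have Yv: "cross3 (V1 0) (U 0) = Y0" by (simp add: V1 dU Y0_def)
  have wv: "(1 + V 0 \<bullet> V 0) *\<^sub>R V1 0 - (V1 0 \<bullet> V 0) *\<^sub>R V 0 = w0" by (simp add: V V1 w0_def W_def)
  have E0: "Efun m p = A0 *\<^sub>R X0 - B0 *\<^sub>R Y0 + C0 *\<^sub>R w0"
    using dec[of 0] unfolding Av Bv Cv Xv Yv wv by simp
  note F = has_vector_derivative_add[OF has_vector_derivative_diff[OF
     has_vector_derivative_scaleR[OF dA dX] has_vector_derivative_scaleR[OF dB dY]]
     has_vector_derivative_scaleR[OF dC dw]]
  show ?thesis
    unfolding dec
    apply (rule has_vector_derivative_eq_rhs[OF F])
    unfolding Av Bv Cv Xv Yv wv E0
    apply (simp add: inner_add_right inner_diff_right inner_scaleR_right vw0 cross_add_right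
       Cross3.right_diff_distrib cross_mult_right algebra_simps)
    apply (rule lincomb)
    done
qed
end
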